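(* Let $N\ge 1$, let $\rho$ be any $N$-qubit density matrix, let $O$ be any Hermitian $2^N\times 2^N$ matrix, and let $\hat\sigma$ be a SIC POVM classical shadow of $\rho$. Then $$\mathrm{Var}\big[\mathrm{tr}(O\hat\sigma)\big]\le 3^N\,\mathrm{tr}(O^2).$$
   Context: Let $|\psi_1\rangle,\dots,|\psi_4\rangle\in\mathbb C^2$ be unit vectors forming a single-qubit SIC set, i.e. $|\langle\psi_i|\psi_j\rangle|^2=1/3$ for all $i\neq j$ (their Bloch vectors form a regular tetrahedron); then $\{\tfrac12|\psi_i\rangle\langle\psi_i|\}_{i=1}^4$ is a POVM (the single-qubit SIC POVM). Performing this measurement on each qubit of an $N$-qubit state $\rho$ yields an outcome string $(i_1,\dots,i_N)\in\{1,2,3,4\}^N$ with probability $\Pr[i_1\cdots i_N\mid\rho]=2^{-N}\langle\psi_{i_1}\otimes\cdots\otimes\psi_{i_N}|\,\rho\,|\psi_{i_1}\otimes\cdots\otimes\psi_{i_N}\rangle$. The (SIC POVM) classical shadow associated with this random outcome is the random Hermitian matrix $\hat\sigma=\bigotimes_{n=1}^N\big(3|\psi_{i_n}\rangle\langle\psi_{i_n}|-\mathbb I\big)$. Expectations and variances are taken with respect to the outcome distribution. *)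

theory Defs
  imports "Jordan_Normal_Form.Matrix"
begin

definition braket :: "complex vec \<Rightarrow> complex vec \<Rightarrow> complex" where
  "braket u v = (\<Sum>k<dim_vec u. cnj (u $ k) * v $ k)"

definition mat_trace :: "complex mat \<Rightarrow> complex" where
  "mat_trace A = (\<Sum>i<dim_row A. A $$ (i, i))"

definition hermitian_mat :: "complex mat \<Rightarrow> bool" where
  "hermitian_mat A \<longleftrightarrow> square_mat A \<and>
     (\<forall>i<dim_row A. \<forall>j<dim_row A. A $$ (i, j) = cnj (A $$ (j, i)))"

definition density_mat :: "nat \<Rightarrow> complex mat \<Rightarrow> bool" where
  "density_mat N \<rho> \<longleftrightarrow> \<rho> \<in> carrier_mat (2^N) (2^N) \<and> hermitian_mat \<rho> \<and>
     (\<forall>v \<in> carrier_vec (2^N). 0 \<le> Re (braket v (\<rho> *\<^sub>v v))) \<and> mat_trace \<rho> = 1"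

(* Kronecker (tensor) products; the first factor is the most significant index *)
definition kron_vec :: "complex vec \<Rightarrow> complex vec \<Rightarrow> complex vec" where
  "kron_vec u v = vec (dim_vec u * dim_vec v) (\<lambda>i. u $ (i div dim_vec v) * v $ (i mod dim_vec v))"

definition kron_mat :: "complex mat \<Rightarrow> complex mat \<Rightarrow> complex mat" where
  "kron_mat A B = mat (dim_row A * dim_row B) (dim_col A * dim_col B)
     (\<lambda>(i, j). A $$ (i div dim_row B, j div dim_col B) * B $$ (i mod dim_row B, j mod dim_col B))"

definition tensor_vecs :: "complex vec list \<Rightarrow> complex vec" where
  "tensor_vecs vs = foldr kron_vec vs (vec 1 (\<lambda>_. 1))"

definition tensor_mats :: "complex mat list \<Rightarrow> complex mat" where
  "tensor_mats As = foldr kron_mat As (1\<^sub>m 1)"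

definition proj :: "complex vec \<Rightarrow> complex mat" where
  "proj v = mat (dim_vec v) (dim_vec v) (\<lambda>(i, j). v $ i * cnj (v $ j))"

(* single-qubit SIC set, outcomes labelled 0..3 instead of 1..4 *)
definition sic_set :: "(nat \<Rightarrow> complex vec) \<Rightarrow> bool" where
  "sic_set \<psi> \<longleftrightarrow> (\<forall>i<4. \<psi> i \<in> carrier_vec 2 \<and> braket (\<psi> i) (\<psi> i) = 1) \<and>
     (\<forall>i<4. \<forall>j<4. i \<noteq> j \<longrightarrow> (cmod (braket (\<psi> i) (\<psi> j)))^2 = 1/3)"

definition outcomes :: "nat \<Rightarrow> nat list set" where
  "outcomes N = {is. length is = N \<and> set is \<subseteq> {..<4}}"

definition sic_prob :: "(nat \<Rightarrow> complex vec) \<Rightarrow> nat \<Rightarrow> complex mat \<Rightarrow> nat list \<Rightarrow> real" where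
  "sic_prob \<psi> N \<rho> is =
     (let \<Psi> = tensor_vecs (map \<psi> is) in Re (braket \<Psi> (\<rho> *\<^sub>v \<Psi>)) / 2^N)"

definition sic_shadow :: "(nat \<Rightarrow> complex vec) \<Rightarrow> nat list \<Rightarrow> complex mat" where
  "sic_shadow \<psi> is = tensor_mats (map (\<lambda>i. 3 \<cdot>\<^sub>m proj (\<psi> i) - 1\<^sub>m 2) is)"

definition sic_expect :: "(nat \<Rightarrow> complex vec) \<Rightarrow> nat \<Rightarrow> complex mat \<Rightarrow> (nat list \<Rightarrow> complex) \<Rightarrow> complex" where
  "sic_expect \<psi> N \<rho> X = (\<Sum>is\<in>outcomes N. complex_of_real (sic_prob \<psi> N \<rho> is) * X is)"

definition sic_var :: "(nat \<Rightarrow> complex vec) \<Rightarrow> nat \<Rightarrow> complex mat \<Rightarrow> (nat list \<Rightarrow> complex) \<Rightarrow> real" where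
  "sic_var \<psi> N \<rho> X =
     (\<Sum>is\<in>outcomes N. sic_prob \<psi> N \<rho> is * (cmod (X is - sic_expect \<psi> N \<rho> X))^2)"

end

theory Submission
  imports Defs
begin

lemma sum_split_mult:
  fixes g :: "nat \<Rightarrow> 'a::comm_monoid_add"
  shows "(\<Sum>x<k*M. g x) = (\<Sum>a<k. \<Sum>b<M. g (a*M+b))"
proof -
  have "(\<Sum>x<k*M. g x) = (\<Sum>p\<in>{..<k}\<times>{..<M}. g (fst p * M + snd p))"
  proof (rule sum.reindex_bij_witness[where i="\<lambda>p. fst p * M + snd p" and j="\<lambda>x. (x div M, x mod M)"])
    fix x assume x: "x \<in> {..<k*M}"
    then have "M > 0" by (cases M) auto
    then show "fst (x div M, x mod M) * M + snd (x div M, x mod M) = x" by simp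
    show "(x div M, x mod M) \<in> {..<k}\<times>{..<M}" using x \<open>M>0\<close>
      by (auto simp: less_mult_imp_div_less)
  next
    fix p :: "nat\<times>nat" assume p: "p \<in> {..<k}\<times>{..<M}"
    then obtain a b where ab: "p = (a,b)" "a<k" "b<M" by auto
    then show "(fst p * M + snd p) \<in> {..<k*M}"
    proof -
      have "a*M+b < a*M+M" using ab by simp
      also have "\<dots> = Suc a * M" by simp
      also have "\<dots> \<le> k*M" using ab by (intro mult_le_mono1) simp
      finally show ?thesis using ab by simp
    qed
    show "((fst p * M + snd p) div M, (fst p * M + snd p) mod M) = p" using ab by simp
  qed auto
  also have "\<dots> = (\<Sum>a<k. \<Sum>b<M. g (a*M+b))"
    by (simp add: sum.cartesian_product split_def)
  finally show ?thesis .
qed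

lemma kron_vec_dim[simp]: "dim_vec (kron_vec u v) = dim_vec u * dim_vec v"
  by (simp add: kron_vec_def)

lemma kron_vec_index: "i < dim_vec u * dim_vec v \<Longrightarrow> kron_vec u v $ i = u $ (i div dim_vec v) * v $ (i mod dim_vec v)"
  by (simp add: kron_vec_def)

lemma tensor_vecs_Nil: "tensor_vecs [] = vec 1 (\<lambda>_. 1)" by (simp add: tensor_vecs_def)
lemma tensor_vecs_Cons: "tensor_vecs (v#vs) = kron_vec v (tensor_vecs vs)" by (simp add: tensor_vecs_def)

lemma lists_Suc_sum:
  assumes "finite A"
  shows "(\<Sum>ks\<in>{ks. length ks = Suc n \<and> set ks \<subseteq> A}. g ks) = (\<Sum>k\<in>A. \<Sum>ks\<in>{ks. length ks = n \<and> set ks \<subseteq> A}. g (k#ks))"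
proof -
  have eq: "{ks. length ks = Suc n \<and> set ks \<subseteq> A} = (\<lambda>p. fst p # snd p) ` (A \<times> {ks. length ks = n \<and> set ks \<subseteq> A})"
  proof
    show "{ks. length ks = Suc n \<and> set ks \<subseteq> A} \<subseteq> (\<lambda>p. fst p # snd p) ` (A \<times> {ks. length ks = n \<and> set ks \<subseteq> A})"
    proof
    fix ks assume "ks \<in> {ks. length ks = Suc n \<and> set ks \<subseteq> A}"
    then obtain k ks' where "ks = k # ks'" "length ks' = n" "k \<in> A" "set ks' \<subseteq> A"
      by (cases ks) auto
    then show "ks \<in> (\<lambda>p. fst p # snd p) ` (A \<times> {ks. length ks = n \<and> set ks \<subseteq> A})"
      by (auto intro!: image_eqI[where x="(k,ks')"])
    qed
  qed auto
  have inj: "inj_on (\<lambda>p. fst p # snd p) (A \<times> {ks. length ks = n \<and> set ks \<subseteq> A})"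
    by (auto simp: inj_on_def prod_eq_iff)
  have "(\<Sum>k\<in>A. \<Sum>ks\<in>{ks. length ks = n \<and> set ks \<subseteq> A}. g (k#ks)) = (\<Sum>p\<in>A \<times> {ks. length ks = n \<and> set ks \<subseteq> A}. g (fst p # snd p))"
    by (simp add: sum.cartesian_product split_def)
  then show ?thesis unfolding eq sum.reindex[OF inj] by (simp add: o_def)
qed

lemma dim_tensor_map2:
  assumes "\<And>f k. f \<in> set fs \<Longrightarrow> k < m \<Longrightarrow> dim_vec (f k) = 2"
  shows "length ks = length fs \<Longrightarrow> set ks \<subseteq> {..<m} \<Longrightarrow> dim_vec (tensor_vecs (map2 (\<lambda>f k. f k) fs ks)) = 2^length fs"
  using assms
proof (induction fs arbitrary: ks)
  case Nil then show ?case by (simp add: tensor_vecs_Nil)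
next
  case (Cons f fs)
  then obtain k ks' where "ks = k#ks'" by (cases ks) auto
  with Cons show ?case by (simp add: tensor_vecs_Cons)
qed

lemma tensor_complete:
  fixes fs :: "(nat \<Rightarrow> complex vec) list" and c :: complex
  assumes dims: "\<And>f k. f \<in> set fs \<Longrightarrow> k < m \<Longrightarrow> dim_vec (f k) = 2"
  and comp: "\<And>f a b. f \<in> set fs \<Longrightarrow> a < 2 \<Longrightarrow> b < 2 \<Longrightarrow> (\<Sum>k<m. f k $ a * cnj (f k $ b)) = (if a = b then c else 0)"
  shows "a < 2^length fs \<Longrightarrow> b < 2^length fs \<Longrightarrow> (\<Sum>ks\<in>{ks. length ks = length fs \<and> set ks \<subseteq> {..<m}}.
     tensor_vecs (map2 (\<lambda>f k. f k) fs ks) $ a * cnj (tensor_vecs (map2 (\<lambda>f k. f k) fs ks) $ b)) = (if a = b then c^length fs else 0)"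
  using dims comp
proof (induction fs arbitrary: a b)
  case Nil
  have "{ks. length ks = length ([]::(nat \<Rightarrow> complex vec) list) \<and> set ks \<subseteq> {..<m}} = {[]}" by auto
  then show ?case using Nil by (simp add: tensor_vecs_Nil)
next
  case (Cons f fs)
  let ?n = "length fs"
  let ?T = "\<lambda>ks. tensor_vecs (map2 (\<lambda>f k. f k) fs ks)"
  let ?S = "{ks. length ks = ?n \<and> set ks \<subseteq> {..<m}}"
  have dT: "\<And>ks. ks \<in> ?S \<Longrightarrow> dim_vec (?T ks) = 2^?n"
    using dim_tensor_map2[of fs m] Cons.prems by auto
  have df: "\<And>k. k < m \<Longrightarrow> dim_vec (f k) = 2" using Cons.prems by auto
  have ent: "\<And>x k ks. x < 2*2^?n \<Longrightarrow> k < m \<Longrightarrow> ks \<in> ?S \<Longrightarrow>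
      tensor_vecs (f k # map2 (\<lambda>f k. f k) fs ks) $ x = f k $ (x div 2^?n) * ?T ks $ (x mod 2^?n)"
    by (simp add: tensor_vecs_Cons kron_vec_index dT df)
  have a: "a < 2*2^?n" and b: "b < 2*2^?n" using Cons.prems by auto
  have "(\<Sum>ks\<in>{ks. length ks = length (f#fs) \<and> set ks \<subseteq> {..<m}}.
     tensor_vecs (map2 (\<lambda>f k. f k) (f#fs) ks) $ a * cnj (tensor_vecs (map2 (\<lambda>f k. f k) (f#fs) ks) $ b))
    = (\<Sum>k<m. \<Sum>ks\<in>?S. (f k $ (a div 2^?n) * cnj (f k $ (b div 2^?n))) * (?T ks $ (a mod 2^?n) * cnj (?T ks $ (b mod 2^?n))))"
    unfolding length_Cons lists_Suc_sum[OF finite_lessThan]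
  proof (intro sum.cong refl)
    fix k ks assume k: "k \<in> {..<m}" and ks: "ks \<in> ?S"
    show "tensor_vecs (map2 (\<lambda>f k. f k) (f#fs) (k#ks)) $ a * cnj (tensor_vecs (map2 (\<lambda>f k. f k) (f#fs) (k#ks)) $ b) =
       (f k $ (a div 2^?n) * cnj (f k $ (b div 2^?n))) * (?T ks $ (a mod 2^?n) * cnj (?T ks $ (b mod 2^?n)))"
      using ent[OF a _ ks] ent[OF b _ ks] k by simp
  qed
  also have "\<dots> = (\<Sum>k<m. f k $ (a div 2^?n) * cnj (f k $ (b div 2^?n))) * (\<Sum>ks\<in>?S. ?T ks $ (a mod 2^?n) * cnj (?T ks $ (b mod 2^?n)))"
    by (rule sum_product[symmetric])
  also have "\<dots> = (if a div 2^?n = b div 2^?n then c else 0) * (if a mod 2^?n = b mod 2^?n then c^?n else 0)"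
    using Cons.prems Cons.IH[of "a mod 2^?n" "b mod 2^?n"] a b
    by (simp add: less_mult_imp_div_less)
  also have "\<dots> = (if a = b then c^length (f#fs) else 0)"
  proof -
    have "(a = b) = (a div 2^?n = b div 2^?n \<and> a mod 2^?n = b mod 2^?n)" by (metis div_mult_mod_eq)
    then show ?thesis by auto
  qed
  finally show ?case .
qed

lemma sum2: "(\<Sum>a<(2::nat). f a) = f 0 + f 1" by (simp add: numeral_2_eq_2)
lemma sum4: "(\<Sum>a<(4::nat). f a) = f 0 + f 1 + f 2 + f 3" by (simp add: eval_nat_numeral add_ac)

lemma cnj_sum: "cnj (\<Sum>x\<in>A. f x) = (\<Sum>x\<in>A. cnj (f x))"
  by (induction A rule: infinite_finite_induct) auto

lemma sq_eq: "(complex_of_real (cmod z))^2 = z * cnj z"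
  using complex_norm_square[of z] by simp

lemma sic_complete_abs:
  fixes A B :: "nat \<Rightarrow> complex"
  assumes nrm: "\<And>i. i < 4 \<Longrightarrow> cnj (A i) * A i + cnj (B i) * B i = 1"
  and ov: "\<And>i j. i < 4 \<Longrightarrow> j < 4 \<Longrightarrow> i \<noteq> j \<Longrightarrow> (cmod (cnj (A i) * A j + cnj (B i) * B j))^2 = 1/3"
  shows "(\<Sum>i<4. A i * cnj (A i)) = 2" "(\<Sum>i<4. B i * cnj (B i)) = 2" "(\<Sum>i<4. A i * cnj (B i)) = 0"
proof -
  define X where "X = (\<Sum>i<4. A i * cnj (A i))"
  define Y where "Y = (\<Sum>i<4. B i * cnj (B i))"
  define Z where "Z = (\<Sum>i<4. A i * cnj (B i))"
  define x where "x = (\<Sum>i<(4::nat). (cmod (A i))^2)"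
  define y where "y = (\<Sum>i<(4::nat). (cmod (B i))^2)"
  have Xx: "X = of_real x" unfolding X_def x_def by (simp add: sq_eq)
  have Yy: "Y = of_real y" unfolding Y_def y_def by (simp add: sq_eq)
  have "X + Y = (\<Sum>i<4. cnj (A i) * A i + cnj (B i) * B i)"
    unfolding X_def Y_def by (simp add: sum.distrib mult.commute)
  also have "\<dots> = 4" using nrm by simp
  finally have xy: "x + y = 4" using Xx Yy by (metis of_real_add of_real_numeral of_real_eq_iff)
  define w where "w i j = cnj (A i) * A j + cnj (B i) * B j" for i j
  have key: "(\<Sum>i<4. \<Sum>j<4. w i j * cnj (w i j)) = X*X + Y*Y + Z * cnj Z + cnj Z * Z"
  proof -
    have "(\<Sum>i<4. \<Sum>j<4. w i j * cnj (w i j)) =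
      (\<Sum>i<4. \<Sum>j<4. (cnj (A i) * A i) * (A j * cnj (A j)) + (cnj (B i) * B i) * (B j * cnj (B j))
          + (B i * cnj (A i)) * (A j * cnj (B j)) + (A i * cnj (B i)) * (cnj (A j) * B j))"
      unfolding w_def by (intro sum.cong refl) (simp add: algebra_simps)
    also have "\<dots> = X*X + Y*Y + cnj Z * Z + Z * cnj Z"
      unfolding X_def Y_def Z_def cnj_sum
      by (simp add: sum.distrib sum_product mult.commute mult.left_commute, subst sum.swap, simp add: mult_ac)
    finally show ?thesis by simp
  qed
  have wcm: "w i j * cnj (w i j) = of_real ((cmod (w i j))^2)" for i j by (simp add: sq_eq)
  have diag: "i < 4 \<Longrightarrow> w i i * cnj (w i i) = 1" for i using nrm[of i] unfolding w_def by simp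
  have off: "i < 4 \<Longrightarrow> j < 4 \<Longrightarrow> i \<noteq> j \<Longrightarrow> w i j * cnj (w i j) = 1/3" for i j
  proof -
    assume h: "i < 4" "j < 4" "i \<noteq> j"
    have "(cmod (w i j))^2 = 1/3" using ov[OF h] unfolding w_def .
    then show ?thesis unfolding wcm by (simp only:) simp
  qed
  have "(\<Sum>i<4. \<Sum>j<4. w i j * cnj (w i j)) = (\<Sum>i<(4::nat). \<Sum>j<(4::nat). if i = j then 1 else 1/3)"
    using diag off by (intro sum.cong refl) auto
  also have "\<dots> = 8" by (simp add: sum4)
  finally have "X*X + Y*Y + Z * cnj Z + cnj Z * Z = 8" using key by simp
  then have "of_real (x^2 + y^2 + 2 * (cmod Z)^2) = (8::complex)"
  proof -
    have zz: "complex_of_real (cmod Z) * complex_of_real (cmod Z) = Z * cnj Z" using sq_eq[of Z] by (simp add: power2_eq_square)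
    from \<open>X*X + Y*Y + Z * cnj Z + cnj Z * Z = 8\<close> show ?thesis
      unfolding Xx Yy of_real_add of_real_mult of_real_power power2_eq_square zz by (simp add: algebra_simps)
  qed
  then have e8: "x^2 + y^2 + 2 * (cmod Z)^2 = 8"
    by (metis of_real_numeral of_real_eq_iff)
  have "(x-2)^2 + (y-2)^2 + 2 * (cmod Z)^2 = 0"
    using e8 xy by (simp add: power2_eq_square algebra_simps)
  moreover have "(x-2)^2 \<ge> 0" "(y-2)^2 \<ge> 0" "(cmod Z)^2 \<ge> 0" by auto
  ultimately have "(x-2)^2 = 0" "(y-2)^2 = 0" "(cmod Z)^2 = 0" by linarith+
  then have "x = 2" "y = 2" "Z = 0" by auto
  then show "(\<Sum>i<4. A i * cnj (A i)) = 2" "(\<Sum>i<4. B i * cnj (B i)) = 2" "(\<Sum>i<4. A i * cnj (B i)) = 0"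
    using Xx Yy unfolding X_def Y_def Z_def by auto
qed

lemma frame_abs:
  fixes q :: "nat \<Rightarrow> 'p \<Rightarrow> complex" and M :: "'p \<Rightarrow> complex"
  assumes P: "finite P"
  and G: "\<And>i j. i < 4 \<Longrightarrow> j < 4 \<Longrightarrow> (\<Sum>p\<in>P. cnj (q i p) * q j p) = (if i = j then 5 else -1)"
  shows "(\<Sum>i<4. (cmod (\<Sum>p\<in>P. cnj (q i p) * M p))^2) \<le> 6 * (\<Sum>p\<in>P. (cmod (M p))^2)"
proof -
  define c where "c i = (\<Sum>p\<in>P. cnj (q i p) * M p)" for i
  define C where "C = (\<Sum>i<(4::nat). (cmod (c i))^2)"
  define S where "S p = (\<Sum>i<4. c i * q i p)" for p
  define m where "m = (\<Sum>p\<in>P. (cmod (M p))^2)"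
  define s where "s = (\<Sum>i<(4::nat). c i)"
  have CC: "complex_of_real C = (\<Sum>i<4. c i * cnj (c i))" unfolding C_def by (simp add: sq_eq)
  have mm: "complex_of_real m = (\<Sum>p\<in>P. M p * cnj (M p))" unfolding m_def by (simp add: sq_eq)
  have cc: "cnj (c i) = (\<Sum>p\<in>P. cnj (M p) * q i p)" for i unfolding c_def cnj_sum by (simp add: mult.commute)
  have h1: "(\<Sum>p\<in>P. cnj (M p) * S p) = complex_of_real C"
  proof -
    have "(\<Sum>p\<in>P. cnj (M p) * S p) = (\<Sum>i<4. c i * (\<Sum>p\<in>P. cnj (M p) * q i p))"
      unfolding S_def by (simp add: sum_distrib_left sum.swap[of _ P] mult_ac)
    also have "\<dots> = complex_of_real C" unfolding CC cc by simp
    finally show ?thesis .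
  qed
  have h1': "(\<Sum>p\<in>P. M p * cnj (S p)) = complex_of_real C"
  proof -
    have "(\<Sum>p\<in>P. M p * cnj (S p)) = cnj (\<Sum>p\<in>P. cnj (M p) * S p)" by (simp add: cnj_sum)
    then show ?thesis using h1 by simp
  qed
  have Gc: "(\<Sum>p\<in>P. q i p * cnj (q j p)) = 6 * (if i = j then 1 else 0) - 1" if "i < 4" "j < 4" for i j
  proof -
    have "(\<Sum>p\<in>P. q i p * cnj (q j p)) = cnj (\<Sum>p\<in>P. cnj (q i p) * q j p)" by (simp add: cnj_sum mult.commute)
    then show ?thesis using G[OF that] by simp
  qed
  have h2: "(\<Sum>p\<in>P. S p * cnj (S p)) = 6 * complex_of_real C - s * cnj s"
  proof -
    have "(\<Sum>p\<in>P. S p * cnj (S p)) = (\<Sum>p\<in>P. \<Sum>i<4. \<Sum>j<4. c i * cnj (c j) * (q i p * cnj (q j p)))"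
      unfolding S_def cnj_sum by (simp add: sum_product mult_ac)
    also have "\<dots> = (\<Sum>i<4. \<Sum>j<4. c i * cnj (c j) * (\<Sum>p\<in>P. q i p * cnj (q j p)))"
      by (simp add: sum_distrib_left sum.swap[of _ P])
    also have "\<dots> = (\<Sum>i<4. \<Sum>j<4. c i * cnj (c j) * (6 * (if i = j then 1 else 0) - 1))"
      by (intro sum.cong refl) (simp add: Gc)
    also have "\<dots> = (\<Sum>i<4. 6 * (c i * cnj (c i)) - (\<Sum>j<4. c i * cnj (c j)))"
    proof (intro sum.cong refl)
      fix i :: nat assume i: "i \<in> {..<4}"
      have "(\<Sum>j<4. c i * cnj (c j) * (6 * (if i = j then 1 else 0) - 1)) =
            (\<Sum>j<4. 6 * (if i = j then c i * cnj (c j) else 0) - c i * cnj (c j))"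
        by (intro sum.cong refl) auto
      also have "\<dots> = 6 * (c i * cnj (c i)) - (\<Sum>j<4. c i * cnj (c j))"
        using i by (simp add: sum_subtractf sum_distrib_left[symmetric])
      finally show "(\<Sum>j<4. c i * cnj (c j) * (6 * (if i = j then 1 else 0) - 1)) = 6 * (c i * cnj (c i)) - (\<Sum>j<4. c i * cnj (c j))" .
    qed
    also have "\<dots> = 6 * complex_of_real C - s * cnj s"
      unfolding CC s_def cnj_sum by (simp add: sum_subtractf sum_distrib_left sum_product sum_distrib_right, rule sum.swap)
    finally show ?thesis .
  qed
  define L where "L = (\<Sum>p\<in>P. (cmod (M p - S p / 6))^2)"
  have L0: "L \<ge> 0" unfolding L_def by (intro sum_nonneg) auto
  have "complex_of_real L = (\<Sum>p\<in>P. (M p - S p / 6) * cnj (M p - S p / 6))" unfolding L_def by (simp add: sq_eq)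
  also have "\<dots> = (\<Sum>p\<in>P. M p * cnj (M p) - (cnj (M p) * S p) / 6 - (M p * cnj (S p)) / 6 + S p * cnj (S p) / 36)"
    by (intro sum.cong refl) (simp add: algebra_simps)
  also have "\<dots> = (\<Sum>p\<in>P. M p * cnj (M p)) - (\<Sum>p\<in>P. cnj (M p) * S p) / 6 - (\<Sum>p\<in>P. M p * cnj (S p)) / 6 + (\<Sum>p\<in>P. S p * cnj (S p)) / 36"
    by (simp add: sum.distrib sum_subtractf sum_divide_distrib)
  also have "\<dots> = complex_of_real m - complex_of_real C / 6 - complex_of_real C / 6 + (6 * complex_of_real C - s * cnj s) / 36"
    by (simp only: mm h1 h1' h2)
  also have "\<dots> = complex_of_real (m - C/6 - (cmod s)^2 / 36)"
    by (simp add: sq_eq[symmetric] algebra_simps) (simp add: field_simps)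
  finally have "L = m - C/6 - (cmod s)^2/36" using of_real_eq_iff by blast
  moreover have "(cmod s)^2 \<ge> 0" by simp
  ultimately have "C \<le> 6 * m" using L0 by linarith
  then show ?thesis unfolding C_def m_def c_def .
qed

lemma mult_entry: "A \<in> carrier_mat n k \<Longrightarrow> B \<in> carrier_mat k m \<Longrightarrow> i < n \<Longrightarrow> j < m \<Longrightarrow>
   (A * B) $$ (i,j) = (\<Sum>l<k. A $$ (i,l) * B $$ (l,j))"
  by (simp add: scalar_prod_def atLeast0LessThan)

lemma trace_mult: "A \<in> carrier_mat n n \<Longrightarrow> B \<in> carrier_mat n n \<Longrightarrow>
   mat_trace (A * B) = (\<Sum>x<n. \<Sum>y<n. A $$ (x,y) * B $$ (y,x))"
proof -
  assume A: "A \<in> carrier_mat n n" and B: "B \<in> carrier_mat n n"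
  have "dim_row (A * B) = n" using A by simp
  then show ?thesis unfolding mat_trace_def using mult_entry[OF A B] by simp
qed

lemma braket_mat: "dim_vec u = n \<Longrightarrow> R \<in> carrier_mat n n \<Longrightarrow>
   braket u (R *\<^sub>v u) = (\<Sum>x<n. \<Sum>y<n. cnj (u $ x) * R $$ (x,y) * u $ y)"
  unfolding braket_def by (simp add: scalar_prod_def atLeast0LessThan sum_distrib_left mult_ac)

lemma kron_mat_dims[simp]: "dim_row (kron_mat A B) = dim_row A * dim_row B" "dim_col (kron_mat A B) = dim_col A * dim_col B"
  by (simp_all add: kron_mat_def)

lemma kron_mat_index: "i < dim_row A * dim_row B \<Longrightarrow> j < dim_col A * dim_col B \<Longrightarrow>
  kron_mat A B $$ (i,j) = A $$ (i div dim_row B, j div dim_col B) * B $$ (i mod dim_row B, j mod dim_col B)"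
  by (simp add: kron_mat_def)

definition Qm :: "(nat \<Rightarrow> complex vec) \<Rightarrow> nat \<Rightarrow> complex mat" where
  "Qm \<psi> i = 3 \<cdot>\<^sub>m proj (\<psi> i) - 1\<^sub>m 2"

lemma Qm_dims[simp]: "dim_row (Qm \<psi> i) = 2" "dim_col (Qm \<psi> i) = 2" unfolding Qm_def by simp_all
lemma Qm_carrier: "Qm \<psi> i \<in> carrier_mat 2 2" by (rule carrier_matI) simp_all

lemma sic_shadow_Nil: "sic_shadow \<psi> [] = 1\<^sub>m 1" by (simp add: sic_shadow_def tensor_mats_def)
lemma sic_shadow_Cons: "sic_shadow \<psi> (i#js) = kron_mat (Qm \<psi> i) (sic_shadow \<psi> js)"
  by (simp add: sic_shadow_def tensor_mats_def Qm_def)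

lemma sic_shadow_carrier: "sic_shadow \<psi> js \<in> carrier_mat (2^length js) (2^length js)"
proof (induction js)
  case Nil then show ?case by (simp add: sic_shadow_Nil)
next
  case (Cons i js)
  have q: "dim_row (Qm \<psi> i) = 2" "dim_col (Qm \<psi> i) = 2" by simp_all
  have t: "dim_row (sic_shadow \<psi> js) = 2^length js" "dim_col (sic_shadow \<psi> js) = 2^length js"
    using Cons by (auto dest: carrier_matD)
  show ?case unfolding sic_shadow_Cons by (rule carrier_matI) (simp_all only: kron_mat_dims q t length_Cons power_Suc)
qed

lemma trace_kron:
  assumes Ob: "Ob \<in> carrier_mat (2*n) (2*n)" and T: "T \<in> carrier_mat n n" and Q: "Q \<in> carrier_mat 2 2"
  shows "mat_trace (Ob * kron_mat Q T) = mat_trace (mat n n (\<lambda>(a2,b2). \<Sum>a1<2. \<Sum>b1<2. Q $$ (b1,a1) * Ob $$ (a1*n+a2, b1*n+b2)) * T)"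
proof -
  have dQ: "dim_row Q = 2" "dim_col Q = 2" using Q by (auto dest: carrier_matD)
  have dT: "dim_row T = n" "dim_col T = n" using T by (auto dest: carrier_matD)
  have K: "kron_mat Q T \<in> carrier_mat (2*n) (2*n)" by (rule carrier_matI) (simp_all only: kron_mat_dims dQ dT)
  have Ki: "x < 2*n \<Longrightarrow> y < 2*n \<Longrightarrow> kron_mat Q T $$ (y,x) = Q $$ (y div n, x div n) * T $$ (y mod n, x mod n)" for x y
    using kron_mat_index[of y Q T x] by (simp only: dQ dT)
  have np: "a1 < 2 \<Longrightarrow> a2 < n \<Longrightarrow> a1*n+a2 < 2*n" for a1 a2 :: nat
  proof -
    assume "a1 < 2" "a2 < n"
    then have "a1*n+a2 < a1*n+n" by simp
    also have "\<dots> = Suc a1 * n" by simp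
    also have "\<dots> \<le> 2*n" using \<open>a1<2\<close> by (intro mult_le_mono1) simp
    finally show ?thesis .
  qed
  have "mat_trace (Ob * kron_mat Q T) = (\<Sum>x<2*n. \<Sum>y<2*n. Ob $$ (x,y) * kron_mat Q T $$ (y,x))"
    using trace_mult[OF Ob K] .
  also have "\<dots> = (\<Sum>a1<2. \<Sum>a2<n. \<Sum>b1<2. \<Sum>b2<n. Ob $$ (a1*n+a2, b1*n+b2) * (Q $$ (b1,a1) * T $$ (b2,a2)))"
    unfolding sum_split_mult
    by (intro sum.cong refl) (simp add: Ki np)
  also have "\<dots> = (\<Sum>a2<n. \<Sum>b2<n. (\<Sum>a1<2. \<Sum>b1<2. Q $$ (b1,a1) * Ob $$ (a1*n+a2, b1*n+b2)) * T $$ (b2,a2))"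
  proof -
    let ?f = "\<lambda>a1 a2 b1 b2. Q $$ (b1,a1) * Ob $$ (a1*n+a2, b1*n+b2) * T $$ (b2,a2)"
    have "(\<Sum>a1<2. \<Sum>a2<n. \<Sum>b1<2. \<Sum>b2<n. Ob $$ (a1*n+a2, b1*n+b2) * (Q $$ (b1,a1) * T $$ (b2,a2)))
       = (\<Sum>a1<2. \<Sum>a2<n. \<Sum>b1<2. \<Sum>b2<n. ?f a1 a2 b1 b2)" by (simp add: mult_ac)
    also have "\<dots> = (\<Sum>a2<n. \<Sum>a1<2. \<Sum>b1<2. \<Sum>b2<n. ?f a1 a2 b1 b2)" by (rule sum.swap)
    also have "\<dots> = (\<Sum>a2<n. \<Sum>a1<2. \<Sum>b2<n. \<Sum>b1<2. ?f a1 a2 b1 b2)"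
      by (rule sum.cong[OF refl], rule sum.cong[OF refl], rule sum.swap)
    also have "\<dots> = (\<Sum>a2<n. \<Sum>b2<n. \<Sum>a1<2. \<Sum>b1<2. ?f a1 a2 b1 b2)"
      by (rule sum.cong[OF refl], rule sum.swap)
    also have "\<dots> = (\<Sum>a2<n. \<Sum>b2<n. (\<Sum>a1<2. \<Sum>b1<2. Q $$ (b1,a1) * Ob $$ (a1*n+a2, b1*n+b2)) * T $$ (b2,a2))"
      by (simp add: sum_distrib_right)
    finally show ?thesis .
  qed
  also have "\<dots> = mat_trace (mat n n (\<lambda>(a2,b2). \<Sum>a1<2. \<Sum>b1<2. Q $$ (b1,a1) * Ob $$ (a1*n+a2, b1*n+b2)) * T)"
    using T by (subst trace_mult[of _ n]) auto
  finally show ?thesis .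
qed

lemma sic_dim: "sic_set \<psi> \<Longrightarrow> i < 4 \<Longrightarrow> dim_vec (\<psi> i) = 2"
  unfolding sic_set_def by (auto dest: carrier_vecD)

lemma sic_norm: "sic_set \<psi> \<Longrightarrow> i < 4 \<Longrightarrow> cnj (\<psi> i $ 0) * \<psi> i $ 0 + cnj (\<psi> i $ 1) * \<psi> i $ 1 = 1"
  using sic_dim[of \<psi> i] unfolding sic_set_def braket_def by (auto simp: sum2)

lemma sic_ov: "sic_set \<psi> \<Longrightarrow> i < 4 \<Longrightarrow> j < 4 \<Longrightarrow> i \<noteq> j \<Longrightarrow>
   (cmod (cnj (\<psi> i $ 0) * \<psi> j $ 0 + cnj (\<psi> i $ 1) * \<psi> j $ 1))^2 = 1/3"
proof -
  assume S: "sic_set \<psi>" and h: "i < 4" "j < 4" "i \<noteq> j"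
  have "(cmod (braket (\<psi> i) (\<psi> j)))^2 = 1/3" using S h unfolding sic_set_def by blast
  moreover have "braket (\<psi> i) (\<psi> j) = cnj (\<psi> i $ 0) * \<psi> j $ 0 + cnj (\<psi> i $ 1) * \<psi> j $ 1"
    unfolding braket_def sic_dim[OF S h(1)] by (simp add: sum2)
  ultimately show ?thesis by simp
qed

lemma Qm_entry: "sic_set \<psi> \<Longrightarrow> i < 4 \<Longrightarrow> a < 2 \<Longrightarrow> b < 2 \<Longrightarrow>
   Qm \<psi> i $$ (a,b) = 3 * (\<psi> i $ a * cnj (\<psi> i $ b)) - (if a = b then 1 else 0)"
  using sic_dim[of \<psi> i] unfolding Qm_def proj_def by simp

lemma G_poly:
  fixes u v :: "nat \<Rightarrow> complex"
  shows "(\<Sum>a<2. \<Sum>b<2. (3 * (u b * cnj (u a)) - (if b = a then 1 else 0)) *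
            cnj (3 * (v b * cnj (v a)) - (if b = a then 1 else 0)))
    = 9 * ((cnj (u 0) * v 0 + cnj (u 1) * v 1) * cnj (cnj (u 0) * v 0 + cnj (u 1) * v 1))
       - 3 * (cnj (u 0) * u 0 + cnj (u 1) * u 1) - 3 * (cnj (v 0) * v 0 + cnj (v 1) * v 1) + 2"
  apply (simp only: sum2)
  apply simp
  apply (simp add: algebra_simps)
  done

lemma cm3: "(cmod w)^2 = r \<Longrightarrow> w * cnj w = complex_of_real r"
  using complex_norm_square[of w] by simp

lemma G_sic:
  assumes S: "sic_set \<psi>" and i: "i < 4" and j: "j < 4"
  shows "(\<Sum>p\<in>{..<2::nat}\<times>{..<2::nat}. Qm \<psi> i $$ (snd p, fst p) * cnj (Qm \<psi> j $$ (snd p, fst p))) = (if i = j then 5 else -1)"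
proof -
  let ?u = "\<lambda>k. \<psi> i $ k" and ?v = "\<lambda>k. \<psi> j $ k"
  have "(\<Sum>p\<in>{..<2::nat}\<times>{..<2::nat}. Qm \<psi> i $$ (snd p, fst p) * cnj (Qm \<psi> j $$ (snd p, fst p)))
     = (\<Sum>a<2. \<Sum>b<2. Qm \<psi> i $$ (b, a) * cnj (Qm \<psi> j $$ (b, a)))"
    by (simp add: sum.cartesian_product split_def)
  also have "\<dots> = (\<Sum>a<2. \<Sum>b<2. (3 * (?u b * cnj (?u a)) - (if b = a then 1 else 0)) *
            cnj (3 * (?v b * cnj (?v a)) - (if b = a then 1 else 0)))"
    by (intro sum.cong refl) (simp add: Qm_entry[OF S i] Qm_entry[OF S j])
  also have "\<dots> = 9 * ((cnj (\<psi> i $ 0) * \<psi> j $ 0 + cnj (\<psi> i $ 1) * \<psi> j $ 1) * cnj (cnj (\<psi> i $ 0) * \<psi> j $ 0 + cnj (\<psi> i $ 1) * \<psi> j $ 1))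
       - 3 * (cnj (\<psi> i $ 0) * \<psi> i $ 0 + cnj (\<psi> i $ 1) * \<psi> i $ 1) - 3 * (cnj (\<psi> j $ 0) * \<psi> j $ 0 + cnj (\<psi> j $ 1) * \<psi> j $ 1) + 2"
    by (rule G_poly[of ?u ?v])
  also have "\<dots> = (if i = j then 5 else -1)"
  proof (cases "i = j")
    case True
    then show ?thesis using sic_norm[OF S i] by simp
  next
    case False
    have "(cmod (cnj (\<psi> i $ 0) * \<psi> j $ 0 + cnj (\<psi> i $ 1) * \<psi> j $ 1))^2 = 1/3" using sic_ov[OF S i j False] .
    then have "(cnj (\<psi> i $ 0) * \<psi> j $ 0 + cnj (\<psi> i $ 1) * \<psi> j $ 1) * cnj (cnj (\<psi> i $ 0) * \<psi> j $ 0 + cnj (\<psi> i $ 1) * \<psi> j $ 1) = 1/3"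
      by (drule_tac cm3) simp
    then show ?thesis using False by (simp only: sic_norm[OF S i] sic_norm[OF S j]) simp
  qed
  finally show ?thesis .
qed

lemma double_split:
  fixes f :: "nat \<Rightarrow> nat \<Rightarrow> 'a::comm_monoid_add"
  shows "(\<Sum>x<2*n. \<Sum>y<2*n. f x y) = (\<Sum>a2<n. \<Sum>b2<n. \<Sum>p\<in>{..<2::nat}\<times>{..<2::nat}. f (fst p * n + a2) (snd p * n + b2))"
proof -
  have "(\<Sum>x<2*n. \<Sum>y<2*n. f x y) = (\<Sum>a1<2. \<Sum>a2<n. \<Sum>b1<2. \<Sum>b2<n. f (a1*n+a2) (b1*n+b2))"
    by (simp add: sum_split_mult)
  also have "\<dots> = (\<Sum>a2<n. \<Sum>a1<2. \<Sum>b1<2. \<Sum>b2<n. f (a1*n+a2) (b1*n+b2))" by (rule sum.swap)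
  also have "\<dots> = (\<Sum>a2<n. \<Sum>a1<2. \<Sum>b2<n. \<Sum>b1<2. f (a1*n+a2) (b1*n+b2))"
    by (rule sum.cong[OF refl], rule sum.cong[OF refl], rule sum.swap)
  also have "\<dots> = (\<Sum>a2<n. \<Sum>b2<n. \<Sum>a1<2. \<Sum>b1<2. f (a1*n+a2) (b1*n+b2))"
    by (rule sum.cong[OF refl], rule sum.swap)
  also have "\<dots> = (\<Sum>a2<n. \<Sum>b2<n. \<Sum>p\<in>{..<2::nat}\<times>{..<2::nat}. f (fst p * n + a2) (snd p * n + b2))"
    by (simp add: sum.cartesian_product split_def)
  finally show ?thesis .
qed

lemma outcomes_Suc_sum: "(\<Sum>is\<in>outcomes (Suc N). g is) = (\<Sum>i<4. \<Sum>js\<in>outcomes N. g (i#js))"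
  unfolding outcomes_def by (rule lists_Suc_sum) simp

lemma frame_tensor:
  assumes S: "sic_set \<psi>"
  shows "Ob \<in> carrier_mat (2^N) (2^N) \<Longrightarrow> (\<Sum>is\<in>outcomes N. (cmod (mat_trace (Ob * sic_shadow \<psi> is)))^2)
     \<le> 6^N * (\<Sum>a<2^N. \<Sum>b<2^N. (cmod (Ob $$ (a,b)))^2)"
proof (induction N arbitrary: Ob)
  case 0
  have o: "outcomes 0 = {[]}" by (auto simp: outcomes_def)
  have "mat_trace (Ob * sic_shadow \<psi> []) = Ob $$ (0,0)"
    using 0 unfolding sic_shadow_Nil by (subst trace_mult[of _ 1]) auto
  then show ?case by (simp add: o)
next
  case (Suc N)
  let ?n = "2^N :: nat"
  let ?P = "{..<2::nat}\<times>{..<2::nat}"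
  have Ob: "Ob \<in> carrier_mat (2*?n) (2*?n)" using Suc.prems by simp
  define Op where "Op i = mat ?n ?n (\<lambda>(a2,b2). \<Sum>a1<2. \<Sum>b1<2. Qm \<psi> i $$ (b1,a1) * Ob $$ (a1*?n+a2, b1*?n+b2))" for i
  have Opc: "Op i \<in> carrier_mat ?n ?n" for i by (simp add: Op_def)
  have tr: "mat_trace (Ob * sic_shadow \<psi> (i#js)) = mat_trace (Op i * sic_shadow \<psi> js)" if "js \<in> outcomes N" for i js
  proof -
    have "length js = N" using that by (simp add: outcomes_def)
    then have "sic_shadow \<psi> js \<in> carrier_mat ?n ?n" using sic_shadow_carrier[of \<psi> js] by simp
    then show ?thesis unfolding sic_shadow_Cons Op_def by (rule trace_kron[OF Ob _ Qm_carrier])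
  qed
  define q where "q i p = cnj (Qm \<psi> i $$ (snd p, fst p))" for i and p :: "nat \<times> nat"
  define M where "M a b p = Ob $$ (fst p * ?n + a, snd p * ?n + b)" for a b and p :: "nat \<times> nat"
  have Ope: "Op i $$ (a,b) = (\<Sum>p\<in>?P. cnj (q i p) * M a b p)" if "a < ?n" "b < ?n" for i a b
    using that unfolding Op_def q_def M_def by (simp add: sum.cartesian_product split_def)
  have G: "(\<Sum>p\<in>?P. cnj (q i p) * q j p) = (if i = j then 5 else -1)" if "i < 4" "j < 4" for i j
    unfolding q_def using G_sic[OF S that] by simp
  have "(\<Sum>is\<in>outcomes (Suc N). (cmod (mat_trace (Ob * sic_shadow \<psi> is)))^2)
      = (\<Sum>i<4. \<Sum>js\<in>outcomes N. (cmod (mat_trace (Op i * sic_shadow \<psi> js)))^2)"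
    unfolding outcomes_Suc_sum by (intro sum.cong refl) (simp add: tr)
  also have "\<dots> \<le> (\<Sum>i<4. 6^N * (\<Sum>a<?n. \<Sum>b<?n. (cmod (Op i $$ (a,b)))^2))"
    by (intro sum_mono Suc.IH Opc)
  also have "\<dots> = 6^N * (\<Sum>a<?n. \<Sum>b<?n. \<Sum>i<4. (cmod (\<Sum>p\<in>?P. cnj (q i p) * M a b p))^2)"
  proof -
    have "(\<Sum>i<4. (\<Sum>a<?n. \<Sum>b<?n. (cmod (Op i $$ (a,b)))^2)) = (\<Sum>i<4. (\<Sum>a<?n. \<Sum>b<?n. (cmod (\<Sum>p\<in>?P. cnj (q i p) * M a b p))^2))"
      by (intro sum.cong refl) (simp add: Ope)
    also have "\<dots> = (\<Sum>a<?n. \<Sum>i<4. \<Sum>b<?n. (cmod (\<Sum>p\<in>?P. cnj (q i p) * M a b p))^2)" by (rule sum.swap)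
    also have "\<dots> = (\<Sum>a<?n. \<Sum>b<?n. \<Sum>i<4. (cmod (\<Sum>p\<in>?P. cnj (q i p) * M a b p))^2)"
      by (rule sum.cong[OF refl], rule sum.swap)
    finally have e: "(\<Sum>i<4. (\<Sum>a<?n. \<Sum>b<?n. (cmod (Op i $$ (a,b)))^2)) = (\<Sum>a<?n. \<Sum>b<?n. \<Sum>i<4. (cmod (\<Sum>p\<in>?P. cnj (q i p) * M a b p))^2)" .
    show ?thesis by (simp only: sum_distrib_left[symmetric] e)
  qed
  also have "\<dots> \<le> 6^N * (\<Sum>a<?n. \<Sum>b<?n. 6 * (\<Sum>p\<in>?P. (cmod (M a b p))^2))"
    by (intro mult_left_mono sum_mono frame_abs G) auto
  also have "\<dots> = 6^(Suc N) * (\<Sum>x<2*?n. \<Sum>y<2*?n. (cmod (Ob $$ (x,y)))^2)"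
    unfolding double_split M_def by (simp add: sum_distrib_left mult_ac)
  finally show ?case by simp
qed

lemma sic_complete:
  assumes S: "sic_set \<psi>" and a: "a < 2" and b: "b < 2"
  shows "(\<Sum>i<4. \<psi> i $ a * cnj (\<psi> i $ b)) = (if a = b then 2 else 0)"
proof -
  let ?A = "\<lambda>i. \<psi> i $ 0" and ?B = "\<lambda>i. \<psi> i $ 1"
  have c: "(\<Sum>i<4. ?A i * cnj (?A i)) = 2" "(\<Sum>i<4. ?B i * cnj (?B i)) = 2" "(\<Sum>i<4. ?A i * cnj (?B i)) = 0"
    using sic_complete_abs[of ?A ?B] sic_norm[OF S] sic_ov[OF S] by blast+
  have c4: "(\<Sum>i<4. ?B i * cnj (?A i)) = 0"
  proof -
    have "(\<Sum>i<4. ?B i * cnj (?A i)) = cnj (\<Sum>i<4. ?A i * cnj (?B i))" by (simp add: cnj_sum mult.commute)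
    also have "\<dots> = cnj 0" using c(3) by (simp only:)
    finally show ?thesis by simp
  qed
  have "a = 0 \<or> a = 1" "b = 0 \<or> b = 1" using a b by auto
  then show ?thesis using c c4 by auto
qed

definition perp :: "complex vec \<Rightarrow> complex vec" where
  "perp v = vec 2 (\<lambda>k. if k = 0 then - cnj (v $ 1) else cnj (v $ 0))"

lemma perp_complete:
  assumes n: "cnj (v $ 0) * v $ 0 + cnj (v $ 1) * v $ 1 = 1" and a: "a < 2" and b: "b < 2"
  shows "(\<Sum>k<(2::nat). (if k = 0 then v else perp v) $ a * cnj ((if k = 0 then v else perp v) $ b)) = (if a = b then 1 else 0)"
proof -
  have "a = 0 \<or> a = 1" "b = 0 \<or> b = 1" using a b by auto
  then show ?thesis using n by (auto simp: sum2 perp_def algebra_simps)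
qed

lemma trace_family:
  assumes fin: "finite S" and d: "\<And>s. s \<in> S \<Longrightarrow> dim_vec (T s) = n"
    and comp: "\<And>x y. x < n \<Longrightarrow> y < n \<Longrightarrow> (\<Sum>s\<in>S. T s $ y * cnj (T s $ x)) = (if x = y then c else 0)"
    and R: "R \<in> carrier_mat n n"
  shows "(\<Sum>s\<in>S. braket (T s) (R *\<^sub>v T s)) = c * mat_trace R"
proof -
  have "(\<Sum>s\<in>S. braket (T s) (R *\<^sub>v T s)) = (\<Sum>s\<in>S. \<Sum>x<n. \<Sum>y<n. cnj (T s $ x) * R $$ (x,y) * T s $ y)"
    by (intro sum.cong refl) (simp add: braket_mat[OF d R])
  also have "\<dots> = (\<Sum>x<n. \<Sum>y<n. R $$ (x,y) * (\<Sum>s\<in>S. T s $ y * cnj (T s $ x)))"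
    by (simp add: sum_distrib_left sum.swap[of _ S] mult_ac)
  also have "\<dots> = (\<Sum>x<n. \<Sum>y<n. R $$ (x,y) * (if x = y then c else 0))"
    by (intro sum.cong refl) (simp add: comp)
  also have "\<dots> = c * mat_trace R"
    using R by (simp add: mat_trace_def sum_distrib_left mult.commute if_distrib cong: if_cong)
  finally show ?thesis .
qed

lemma map2_replicate: "length ks = N \<Longrightarrow> map2 (\<lambda>f k. f k) (replicate N g) ks = map g ks"
  by (induction ks arbitrary: N) auto

lemma map2_rep0: "map2 (\<lambda>f k. f k) (map F is) (replicate (length is) 0) = map (\<lambda>i. F i 0) is"
  by (induction "is") auto

lemma tensor_map_dim: "sic_set \<psi> \<Longrightarrow> is \<in> outcomes N \<Longrightarrow> dim_vec (tensor_vecs (map \<psi> is)) = 2^N"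
  using dim_tensor_map2[of "replicate N \<psi>" 4 "is"] sic_dim[of \<psi>]
  by (simp add: outcomes_def map2_replicate)

lemma sum_prob:
  assumes S: "sic_set \<psi>" and D: "density_mat N \<rho>"
  shows "(\<Sum>is\<in>outcomes N. sic_prob \<psi> N \<rho> is) = 1"
proof -
  have R: "\<rho> \<in> carrier_mat (2^N) (2^N)" and tr: "mat_trace \<rho> = 1" using D by (auto simp: density_mat_def)
  have comp: "(\<Sum>is\<in>outcomes N. tensor_vecs (map \<psi> is) $ y * cnj (tensor_vecs (map \<psi> is) $ x)) = (if x = y then 2^N else 0)"
    if "x < 2^N" "y < 2^N" for x y
  proof -
    have "(\<Sum>ks\<in>{ks. length ks = length (replicate N \<psi>) \<and> set ks \<subseteq> {..<4}}.
       tensor_vecs (map2 (\<lambda>f k. f k) (replicate N \<psi>) ks) $ y * cnj (tensor_vecs (map2 (\<lambda>f k. f k) (replicate N \<psi>) ks) $ x))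
       = (if y = x then 2^length (replicate N \<psi>) else 0)"
      using that by (intro tensor_complete) (auto simp: sic_dim[OF S] sic_complete[OF S])
    moreover have "\<And>ks. ks \<in> {ks. length ks = length (replicate N \<psi>) \<and> set ks \<subseteq> {..<4}} \<Longrightarrow> map2 (\<lambda>f k. f k) (replicate N \<psi>) ks = map \<psi> ks"
      by (simp add: map2_replicate)
    moreover have "(\<Sum>is\<in>outcomes N. tensor_vecs (map \<psi> is) $ y * cnj (tensor_vecs (map \<psi> is) $ x)) =
       (\<Sum>ks\<in>{ks. length ks = length (replicate N \<psi>) \<and> set ks \<subseteq> {..<4}}.
       tensor_vecs (map2 (\<lambda>f k. f k) (replicate N \<psi>) ks) $ y * cnj (tensor_vecs (map2 (\<lambda>f k. f k) (replicate N \<psi>) ks) $ x))"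
      unfolding outcomes_def by (intro sum.cong) (auto simp: map2_replicate)
    ultimately show ?thesis by auto
  qed
  have fin: "finite (outcomes N)" unfolding outcomes_def
    using finite_lists_length_eq[of "{..<4::nat}" N] by (simp add: conj_commute)
  have "(\<Sum>is\<in>outcomes N. braket (tensor_vecs (map \<psi> is)) (\<rho> *\<^sub>v tensor_vecs (map \<psi> is))) = 2^N * mat_trace \<rho>"
    by (rule trace_family[OF fin _ comp R]) (simp_all add: tensor_map_dim[OF S])
  then have "(\<Sum>is\<in>outcomes N. Re (braket (tensor_vecs (map \<psi> is)) (\<rho> *\<^sub>v tensor_vecs (map \<psi> is)))) = 2^N"
    using tr by (metis Re_sum mult.right_neutral Re_complex_of_real of_real_numeral of_real_power)
  then show ?thesis unfolding sic_prob_def Let_def by (simp add: sum_divide_distrib[symmetric])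
qed

lemma prob_nonneg:
  assumes S: "sic_set \<psi>" and D: "density_mat N \<rho>" and i: "is \<in> outcomes N"
  shows "sic_prob \<psi> N \<rho> is \<ge> 0"
proof -
  have "tensor_vecs (map \<psi> is) \<in> carrier_vec (2^N)" using tensor_map_dim[OF S i] by (rule carrier_vecI)
  then have "0 \<le> Re (braket (tensor_vecs (map \<psi> is)) (\<rho> *\<^sub>v tensor_vecs (map \<psi> is)))"
    using D by (simp add: density_mat_def)
  then show ?thesis unfolding sic_prob_def Let_def by simp
qed

lemma prob_le:
  assumes S: "sic_set \<psi>" and D: "density_mat N \<rho>" and i: "is \<in> outcomes N"
  shows "sic_prob \<psi> N \<rho> is \<le> 1 / 2^N"
proof -
  have R: "\<rho> \<in> carrier_mat (2^N) (2^N)" and tr: "mat_trace \<rho> = 1"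
    and psd: "\<And>v. v \<in> carrier_vec (2^N) \<Longrightarrow> 0 \<le> Re (braket v (\<rho> *\<^sub>v v))" using D by (auto simp: density_mat_def)
  have len: "length is = N" and iset: "set is \<subseteq> {..<4}" using i by (auto simp: outcomes_def)
  define F where "F i = (\<lambda>k::nat. if k = 0 then \<psi> i else perp (\<psi> i))" for i
  define fs where "fs = map F is"
  define K where "K = {ks. length ks = length fs \<and> set ks \<subseteq> {..<2::nat}}"
  define T where "T ks = tensor_vecs (map2 (\<lambda>f k. f k) fs ks)" for ks
  have lfs: "length fs = N" using len by (simp add: fs_def)
  have dims: "\<And>f k. f \<in> set fs \<Longrightarrow> k < 2 \<Longrightarrow> dim_vec (f k) = 2"
  proof -
    fix f and k :: nat assume f: "f \<in> set fs" and k: "k < 2"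
    then obtain i where ii: "i \<in> set is" "f = F i" by (auto simp: fs_def)
    then have i4: "i < 4" using iset by auto
    show "dim_vec (f k) = 2"
    proof (cases "k = 0")
      case True then show ?thesis using ii sic_dim[OF S i4] by (simp add: F_def)
    next
      case False then show ?thesis using ii by (simp add: F_def perp_def)
    qed
  qed
  have comp: "\<And>f (a::nat) (b::nat). f \<in> set fs \<Longrightarrow> a < 2 \<Longrightarrow> b < 2 \<Longrightarrow> (\<Sum>k<2. f k $ a * cnj (f k $ b)) = (if a = b then 1 else 0)"
  proof -
    fix f and a b :: nat assume f: "f \<in> set fs" and a: "a < 2" and b: "b < 2"
    then obtain i where ii: "i \<in> set is" "f = F i" by (auto simp: fs_def)
    then have "i < 4" using iset by auto
    have n: "cnj (\<psi> i $ 0) * \<psi> i $ 0 + cnj (\<psi> i $ 1) * \<psi> i $ 1 = 1" using sic_norm[OF S \<open>i<4\<close>] .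
    show "(\<Sum>k<2. f k $ a * cnj (f k $ b)) = (if a = b then 1 else 0)"
      using perp_complete[OF n a b] unfolding ii F_def by simp
  qed
  have finK: "finite K" unfolding K_def
    using finite_lists_length_eq[of "{..<2::nat}" "length fs"] by (simp add: conj_commute)
  have dT: "ks \<in> K \<Longrightarrow> dim_vec (T ks) = 2^N" for ks
  proof -
    assume "ks \<in> K"
    then have "length ks = length fs" "set ks \<subseteq> {..<2}" unfolding K_def by auto
    then have "dim_vec (tensor_vecs (map2 (\<lambda>f k. f k) fs ks)) = 2^length fs"
      apply (intro dim_tensor_map2[of fs 2 ks])
        apply (erule dims, assumption)
       apply assumption+
      done
    then show ?thesis unfolding T_def lfs .
  qed
  have compT: "(\<Sum>ks\<in>K. T ks $ y * cnj (T ks $ x)) = (if x = y then 1 else 0)" if "x < 2^N" "y < 2^N" for x y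
  proof -
    have "(\<Sum>ks\<in>{ks. length ks = length fs \<and> set ks \<subseteq> {..<2}}. tensor_vecs (map2 (\<lambda>f k. f k) fs ks) $ y * cnj (tensor_vecs (map2 (\<lambda>f k. f k) fs ks) $ x))
       = (if y = x then 1^length fs else 0)"
      apply (rule tensor_complete[of fs 2 1 y x])
         apply (erule dims, assumption)
        apply (erule comp, assumption, assumption)
      using that lfs by auto
    then show ?thesis unfolding K_def T_def by auto
  qed
  have sumK: "(\<Sum>ks\<in>K. braket (T ks) (\<rho> *\<^sub>v T ks)) = 1 * mat_trace \<rho>"
    by (rule trace_family[OF finK dT compT R])
  have z: "replicate N 0 \<in> K" unfolding K_def using lfs by auto
  have Tz: "T (replicate N 0) = tensor_vecs (map \<psi> is)"
    unfolding T_def fs_def using map2_rep0[of F "is"] len by (simp add: F_def)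
  have nn: "\<And>ks. ks \<in> K \<Longrightarrow> 0 \<le> Re (braket (T ks) (\<rho> *\<^sub>v T ks))"
    using psd dT carrier_vecI by blast
  have "Re (braket (T (replicate N 0)) (\<rho> *\<^sub>v T (replicate N 0))) \<le> (\<Sum>ks\<in>K. Re (braket (T ks) (\<rho> *\<^sub>v T ks)))"
    by (rule member_le_sum[OF z nn finK]) simp
  also have "\<dots> = Re (\<Sum>ks\<in>K. braket (T ks) (\<rho> *\<^sub>v T ks))" by simp
  also have "\<dots> = 1" using sumK tr by simp
  finally have "Re (braket (tensor_vecs (map \<psi> is)) (\<rho> *\<^sub>v tensor_vecs (map \<psi> is))) \<le> 1" using Tz by simp
  then show ?thesis unfolding sic_prob_def Let_def by (simp add: divide_right_mono)
qed

lemma cmod_diff_sq: "(cmod (x - y))^2 = (cmod x)^2 - 2 * Re (x * cnj y) + (cmod y)^2"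
  unfolding cmod_power2 by (simp add: power2_eq_square algebra_simps)

lemma var_le:
  fixes p :: "'a \<Rightarrow> real" and X :: "'a \<Rightarrow> complex"
  assumes fin: "finite A" and s1: "(\<Sum>a\<in>A. p a) = 1"
  shows "(\<Sum>a\<in>A. p a * (cmod (X a - (\<Sum>b\<in>A. complex_of_real (p b) * X b)))^2) \<le> (\<Sum>a\<in>A. p a * (cmod (X a))^2)"
proof -
  define mu where "mu = (\<Sum>b\<in>A. complex_of_real (p b) * X b)"
  have "(\<Sum>a\<in>A. p a * (cmod (X a - mu))^2) = (\<Sum>a\<in>A. p a * (cmod (X a))^2) - 2 * (\<Sum>a\<in>A. p a * Re (X a * cnj mu)) + (\<Sum>a\<in>A. p a) * (cmod mu)^2"
    by (simp add: cmod_diff_sq algebra_simps sum.distrib sum_subtractf sum_distrib_left sum_distrib_right)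
  also have "(\<Sum>a\<in>A. p a * Re (X a * cnj mu)) = Re (mu * cnj mu)"
    unfolding mu_def by (simp add: sum_distrib_right Re_sum mult.assoc)
  also have "Re (mu * cnj mu) = (cmod mu)^2" by (simp add: complex_norm_square[symmetric])
  finally show ?thesis unfolding mu_def[symmetric] using s1 by simp
qed

lemma herm_trace_sq:
  assumes C: "Obs \<in> carrier_mat n n" and H: "hermitian_mat Obs"
  shows "Re (mat_trace (Obs * Obs)) = (\<Sum>a<n. \<Sum>b<n. (cmod (Obs $$ (a,b)))^2)"
proof -
  have dr: "dim_row Obs = n" using C by (auto dest: carrier_matD)
  have h: "x < n \<Longrightarrow> y < n \<Longrightarrow> Obs $$ (y,x) = cnj (Obs $$ (x,y))" for x y
  proof -
    assume xy: "x < n" "y < n"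
    have hh: "\<forall>i<n. \<forall>j<n. Obs $$ (i,j) = cnj (Obs $$ (j,i))"
      using conjunct2[OF H[unfolded hermitian_mat_def]] unfolding dr .
    then show ?thesis using xy by blast
  qed
  have "mat_trace (Obs * Obs) = (\<Sum>x<n. \<Sum>y<n. Obs $$ (x,y) * Obs $$ (y,x))" by (rule trace_mult[OF C C])
  also have "\<dots> = (\<Sum>x<n. \<Sum>y<n. complex_of_real ((cmod (Obs $$ (x,y)))^2))"
  proof (intro sum.cong refl)
    fix x y assume x: "x \<in> {..<n}" and y: "y \<in> {..<n}"
    have e: "Obs $$ (y,x) = cnj (Obs $$ (x,y))" using x y by (intro h) auto
    show "Obs $$ (x,y) * Obs $$ (y,x) = complex_of_real ((cmod (Obs $$ (x,y)))^2)"
      unfolding e complex_norm_square ..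
  qed
  finally show ?thesis by simp
qed

theorem mainTheorem1:
  fixes N :: nat and \<psi> :: "nat \<Rightarrow> complex vec" and \<rho> Obs :: "complex mat"
  assumes "N \<ge> 1"
    and "sic_set \<psi>"
    and "density_mat N \<rho>"
    and "Obs \<in> carrier_mat (2^N) (2^N)" and "hermitian_mat Obs"
  shows "sic_var \<psi> N \<rho> (\<lambda>is. mat_trace (Obs * sic_shadow \<psi> is)) \<le> 3^N * Re (mat_trace (Obs * Obs))"
proof -
  note S = assms(2) and D = assms(3) and C = assms(4) and H = assms(5)
  define X where "X is = mat_trace (Obs * sic_shadow \<psi> is)" for "is"
  let ?p = "sic_prob \<psi> N \<rho>"
  have fin: "finite (outcomes N)" unfolding outcomes_def
    using finite_lists_length_eq[of "{..<4::nat}" N] by (simp add: conj_commute)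
  have "sic_var \<psi> N \<rho> X \<le> (\<Sum>is\<in>outcomes N. ?p is * (cmod (X is))^2)"
    unfolding sic_var_def sic_expect_def by (rule var_le[OF fin sum_prob[OF S D]])
  also have "\<dots> \<le> (\<Sum>is\<in>outcomes N. (1/2^N) * (cmod (X is))^2)"
    by (intro sum_mono mult_right_mono prob_le[OF S D]) auto
  also have "\<dots> = (1/2^N) * (\<Sum>is\<in>outcomes N. (cmod (X is))^2)" by (simp add: sum_distrib_left)
  also have "\<dots> \<le> (1/2^N) * (6^N * (\<Sum>a<2^N. \<Sum>b<2^N. (cmod (Obs $$ (a,b)))^2))"
    unfolding X_def by (intro mult_left_mono frame_tensor[OF S C]) auto
  also have "\<dots> = 3^N * (\<Sum>a<2^N. \<Sum>b<2^N. (cmod (Obs $$ (a,b)))^2)"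
  proof -
    have "(6::real)^N = 2^N * 3^N" by (simp add: power_mult_distrib[symmetric])
    then show ?thesis by simp
  qed
  also have "\<dots> = 3^N * Re (mat_trace (Obs * Obs))" using herm_trace_sq[OF C H] by simp
  finally show ?thesis unfolding X_def .
qed

end
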